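(* Let $G$ be a topological group. Then $L^0(G)$ is the closure of $\bigcup_{n\ge1}h_n(G^n)$.
   Context: Let $\lambda$ be Lebesgue measure on $[0,1]$. A map $f\colon [0,1]\to G$ is strongly $\lambda$-measurable if for every $\epsilon>0$ there is a closed $A\subseteq[0,1]$ with $\lambda([0,1]\setminus A)\le\epsilon$ and $f|_A$ continuous. $L^{0}(G)$ is the set of $\lambda$-a.e. equivalence classes of strongly $\lambda$-measurable maps $[0,1]\to G$, with pointwise group operations and the topology of convergence in measure: a neighbourhood basis of the identity consists of the sets $N(U,\epsilon)=\{f : \lambda(\{x: f(x)\notin U\})<\epsilon\}$, $U$ an open identity neighbourhood in $G$, $\epsilon>0$. For $n\ge1$, $h_n\colon G^n\to L^0(G)$ sends $(g_1,\dots,g_n)$ to the map which is constantly $g_i$ on $[(i-1)/n,i/n)$ for $i=1,\dots,n$. *)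

theory Defs
  imports "HOL-Analysis.Analysis"
begin

text \<open>Topological groups are modelled by the type class topological_group_add
  (a not necessarily commutative group, written additively, with continuous
  addition and inversion).\<close>

definition strongly_measurable :: "(real \<Rightarrow> 'a::topological_space) \<Rightarrow> bool" where
  "strongly_measurable f \<longleftrightarrow>
     (\<forall>\<epsilon>>0. \<exists>A. closed A \<and> A \<subseteq> {0..1} \<and>
        measure lebesgue ({0..1} - A) \<le> \<epsilon> \<and> continuous_on A f)"

text \<open>Elements of L0(G) are represented by strongly measurable maps; the
  a.e.-equivalence is respected by all notions below (only measures of subsets
  of [0,1] are used).\<close>
definition L0 :: "(real \<Rightarrow> 'a::topological_group_add) set" where
  "L0 = {f. strongly_measurable f}"

text \<open>The basic neighbourhood N(U,eps) of the identity, translated to f: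
  f + N(U,eps) = {g. lambda{x in [0,1]. -f x + g x \<notin> U} < eps}.\<close>
definition L0_nbhd :: "(real \<Rightarrow> 'a::topological_group_add) \<Rightarrow> 'a set \<Rightarrow> real \<Rightarrow> (real \<Rightarrow> 'a) set" where
  "L0_nbhd f U \<epsilon> = {g \<in> L0. {x \<in> {0..1}. - f x + g x \<notin> U} \<in> sets lebesgue \<and>
                           measure lebesgue {x \<in> {0..1}. - f x + g x \<notin> U} < \<epsilon>}"

text \<open>Closure in L0(G) with respect to the topology of convergence in measure,
  given by its neighbourhood bases.\<close>
definition L0_closure :: "(real \<Rightarrow> 'a::topological_group_add) set \<Rightarrow> (real \<Rightarrow> 'a) set" where
  "L0_closure S = {f \<in> L0. \<forall>U \<epsilon>. open U \<and> 0 \<in> U \<and> \<epsilon> > 0 \<longrightarrow> L0_nbhd f U \<epsilon> \<inter> S \<noteq> {}}"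

text \<open>h_n: G^n \<rightarrow> L0(G); a tuple (g_1,...,g_n) is the list gs of length n, and
  h_n gs is constantly gs!(i-1) on [(i-1)/n, i/n). The value at x = 1 (a null set)
  is set to the last entry.\<close>
definition h :: "nat \<Rightarrow> 'a list \<Rightarrow> real \<Rightarrow> 'a" where
  "h n gs x = gs ! min (nat \<lfloor>real n * x\<rfloor>) (n - 1)"

end

theory Submission
  imports Defs
begin

lemma nbhd_W:
  fixes U :: "'a::topological_group_add set"
  assumes "open U" "0 \<in> U"
  obtains W where "open W" "0 \<in> W" "\<And>a b. a \<in> W \<Longrightarrow> b \<in> W \<Longrightarrow> - a + b \<in> U"
proof -
  have c: "continuous_on UNIV (\<lambda>p::'a\<times>'a. - fst p + snd p)"
    by (intro continuous_intros)
  have "open ((\<lambda>p::'a\<times>'a. - fst p + snd p) -` U)"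
    using open_vimage[OF assms(1) c] .
  moreover have "(0,0) \<in> (\<lambda>p::'a\<times>'a. - fst p + snd p) -` U" using assms by simp
  ultimately obtain A B where AB: "open A" "open B" "(0,0) \<in> A \<times> B" "A \<times> B \<subseteq> (\<lambda>p::'a\<times>'a. - fst p + snd p) -` U"
    by (rule open_prod_elim)
  show ?thesis
    by (rule that[of "A \<inter> B"]) (use AB in auto)
qed

lemma unif:
  fixes f :: "real \<Rightarrow> 'a::topological_group_add"
  assumes "compact A" "continuous_on A f" "open U" "0 \<in> U"
  obtains e where "e > 0" "\<And>x y. x \<in> A \<Longrightarrow> y \<in> A \<Longrightarrow> dist x y < e \<Longrightarrow> - f x + f y \<in> U"
proof -
  obtain W where W: "open W" "0 \<in> W" "\<And>a b. a \<in> W \<Longrightarrow> b \<in> W \<Longrightarrow> - a + b \<in> U"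
    using nbhd_W[OF assms(3,4)] by blast
  define G where "G = {T. open T \<and> (\<forall>x\<in>A \<inter> T. \<forall>y\<in>A \<inter> T. - f x + f y \<in> U)}"
  have cov: "A \<subseteq> \<Union>G"
  proof
    fix z assume z: "z \<in> A"
    have oT0: "open ((\<lambda>y. - f z + y) -` W)"
      by (rule open_vimage[OF W(1)]) (intro continuous_intros)
    obtain T where T: "open T" "T \<inter> A = f -` ((\<lambda>y. - f z + y) -` W) \<inter> A"
      using continuous_on_open_invariant[THEN iffD1, OF assms(2), rule_format, OF oT0] by blast
    have "z \<in> f -` ((\<lambda>y. - f z + y) -` W) \<inter> A" using z W(2) by simp
    then have zT: "z \<in> T" using T(2) by blast
    have "T \<in> G"
      unfolding G_def
    proof (intro CollectI conjI ballI)
      fix x y assume x: "x \<in> A \<inter> T" and y: "y \<in> A \<inter> T"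
      have "- f z + f x \<in> W" "- f z + f y \<in> W" using x y T(2) by blast+
      then have "- (- f z + f x) + (- f z + f y) \<in> U" by (rule W(3))
      moreover have "- (- f z + f x) + (- f z + f y) = - f x + f y"
        by (simp add: minus_add add.assoc)
      ultimately show "- f x + f y \<in> U" by simp
    qed (rule T(1))
    then show "z \<in> \<Union>G" using zT by blast
  qed
  have opn: "\<And>T. T \<in> G \<Longrightarrow> open T" by (simp add: G_def)
  obtain e where e: "0 < e" "\<And>x. x \<in> A \<Longrightarrow> \<exists>T\<in>G. ball x e \<subseteq> T"
    using Heine_Borel_lemma[OF assms(1) cov opn] by blast
  show ?thesis
  proof (rule that[OF e(1)])
    fix x y assume xy: "x \<in> A" "y \<in> A" "dist x y < e"
    obtain T where "T \<in> G" "ball x e \<subseteq> T" using e(2)[OF xy(1)] by blast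
    moreover have "x \<in> ball x e" "y \<in> ball x e" using xy e by auto
    ultimately have "x \<in> T" "y \<in> T" "\<forall>x\<in>A \<inter> T. \<forall>y\<in>A \<inter> T. - f x + f y \<in> U" unfolding G_def by auto
    then show "- f x + f y \<in> U" using xy by blast
  qed
qed

lemma lm01: "A \<subseteq> {0..1::real} \<Longrightarrow> A \<in> sets lebesgue \<Longrightarrow> A \<in> lmeasurable"
  using bounded_set_imp_lmeasurable bounded_subset[OF bounded_closed_interval] by blast
lemma closed_leb: "closed (X::real set) \<Longrightarrow> X \<in> sets lebesgue"
  by (metis borel_closed sets_completionI_sets sets_lborel)
lemma idx_meas: "{x::real. min (nat \<lfloor>real n * x\<rfloor>) (n-1) = i} \<in> sets lebesgue"
proof -
  have "{x::real. min (nat \<lfloor>real n * x\<rfloor>) (n-1) = i} \<in> sets borel" by measurable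
  then show ?thesis by (metis sets_completionI_sets sets_lborel)
qed
lemma nul: "A \<subseteq> B \<Longrightarrow> B \<in> null_sets lebesgue \<Longrightarrow> A \<in> sets lebesgue"
  by (meson completion.complete2 null_setsD2)

lemma meas_set:
  fixes f :: "real \<Rightarrow> 'a::topological_group_add"
  assumes sm: "strongly_measurable f" and C: "closed C"
  shows "{x \<in> {0..1}. - f x + gs ! min (nat \<lfloor>real n * x\<rfloor>) (n-1) \<in> C} \<in> sets lebesgue"
proof -
  have "\<forall>k::nat. \<exists>B. closed B \<and> B \<subseteq> {0..1} \<and> measure lebesgue ({0..1} - B) \<le> 1 / Suc k \<and> continuous_on B f"
    using sm unfolding strongly_measurable_def by simp
  then obtain A where A: "\<And>k. closed (A k)" "\<And>k. A k \<subseteq> {0..1}"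
    "\<And>k. measure lebesgue ({0..1} - A k) \<le> 1 / Suc k" "\<And>k. continuous_on (A k) f"
    by metis
  define S where "S = {x \<in> {0..1}. - f x + gs ! min (nat \<lfloor>real n * x\<rfloor>) (n-1) \<in> C}"
  have SA: "S \<inter> A k = (\<Union>i. {x. min (nat \<lfloor>real n * x\<rfloor>) (n-1) = i} \<inter> (A k \<inter> (\<lambda>x. - f x + gs ! i) -` C))" for k
    using A(2)[of k] unfolding S_def by auto
  have SAm: "S \<inter> A k \<in> sets lebesgue" for k
  proof -
    have "{x. min (nat \<lfloor>real n * x\<rfloor>) (n-1) = i} \<inter> (A k \<inter> (\<lambda>x. - f x + gs ! i) -` C) \<in> sets lebesgue" for i
    proof -
      have "continuous_on (A k) (\<lambda>x. - f x + gs ! i)" by (intro continuous_intros A(4))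
      then have "closed (A k \<inter> (\<lambda>x. - f x + gs ! i) -` C)"
        using continuous_closed_preimage A(1) C by blast
      then show "{x. min (nat \<lfloor>real n * x\<rfloor>) (n-1) = i} \<inter> (A k \<inter> (\<lambda>x. - f x + gs ! i) -` C) \<in> sets lebesgue"
        using idx_meas closed_leb by blast
    qed
    then have "(\<lambda>i. {x. min (nat \<lfloor>real n * x\<rfloor>) (n-1) = i} \<inter> (A k \<inter> (\<lambda>x. - f x + gs ! i) -` C)) ` UNIV \<subseteq> sets lebesgue" by blast
    then show ?thesis unfolding SA by (intro sets.countable_UN) auto
  qed
  define N where "N = {0..1} - (\<Union>k. A k)"
  have Nm: "N \<in> sets lebesgue" unfolding N_def using A(1) closed_leb
    by (intro sets.Diff sets.countable_UN) auto
  have Nl: "N \<in> lmeasurable" using lm01[OF _ Nm] N_def by auto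
  have Nle: "measure lebesgue N \<le> 1 / Suc k" for k
  proof -
    have "{0..1} - A k \<in> lmeasurable" using lm01 A(1) closed_leb by (metis Diff_subset sets.Diff sets_lborel borel_closed sets_completionI_sets atLeastAtMost_borel)
    then have "measure lebesgue N \<le> measure lebesgue ({0..1} - A k)"
      by (intro measure_mono_fmeasurable Nm) (auto simp: N_def)
    then show ?thesis using A(3)[of k] by linarith
  qed
  have "measure lebesgue N = 0"
  proof (rule ccontr)
    assume "measure lebesgue N \<noteq> 0"
    then have "measure lebesgue N > 0" using measure_nonneg[of lebesgue N] by linarith
    then obtain k where "inverse (real (Suc k)) < measure lebesgue N" using reals_Archimedean by blast
    then show False using Nle[of k] by (simp add: inverse_eq_divide)
  qed
  then have Nn: "N \<in> null_sets lebesgue"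
    using Nl by (simp add: emeasure_eq_measure2 null_setsI fmeasurableD)
  have "S = (\<Union>k. S \<inter> A k) \<union> (S \<inter> N)" unfolding N_def S_def by auto
  moreover have "S \<inter> N \<in> sets lebesgue" using nul[OF _ Nn] by blast
  ultimately have "S \<in> sets lebesgue" using SAm
    by (metis (no_types, lifting) image_subset_iff sets.Un sets.countable_UN)
  then show ?thesis unfolding S_def .
qed

lemma step_sm:
  assumes n: "n \<ge> 1"
  shows "strongly_measurable (h n gs)"
  unfolding strongly_measurable_def
proof (intro allI impI)
  fix \<epsilon> :: real assume e: "\<epsilon> > 0"
  have rn: "real n > 0" using n by simp
  define \<eta> where "\<eta> = \<epsilon> / real n"
  have eta: "\<eta> > 0" using e rn by (simp add: \<eta>_def)
  define P where "P i = (if i = n - 1 then {real (n-1) / n .. 1} else {real i / n .. (real i + 1) / n - \<eta>})" for i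
  define A where "A = (\<Union>i\<in>{..<n}. P i)"
  have clP: "closed (P i)" for i by (simp add: P_def)
  have "closed A" unfolding A_def using clP by blast
  moreover have "A \<subseteq> {0..1}"
  proof -
    have "P i \<subseteq> {0..1}" if "i < n" for i
    proof (cases "i = n - 1")
      case True then show ?thesis using rn by (auto simp: P_def)
    next
      case False
      then have "real i + 1 \<le> real n" using that by linarith
      then have "(real i + 1) / n \<le> 1" using rn by simp
      moreover have "P i \<subseteq> {real i / n .. (real i + 1) / n}" using False eta by (auto simp: P_def)
      moreover have "real i / n \<ge> 0" by simp
      ultimately show ?thesis by (meson atLeastAtMost_iff order_trans subset_eq)
    qed
    then show ?thesis unfolding A_def by blast
  qed
  moreover have "continuous_on A (h n gs)"
    unfolding A_def
  proof (rule continuous_on_closed_Union)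
    fix i assume i: "i \<in> {..<n}"
    have "h n gs x = gs ! i" if x: "x \<in> P i" for x
    proof (cases "i = n - 1")
      case True
      then have "real (n-1) / n \<le> x" "x \<le> 1" using x by (auto simp: P_def)
      then have "real (n-1) \<le> real n * x" "real n * x \<le> real n" using rn
        by (auto simp: divide_simps mult.commute)
      then have "\<lfloor>real n * x\<rfloor> \<ge> int (n-1)" by linarith
      then have "nat \<lfloor>real n * x\<rfloor> \<ge> n - 1" by linarith
      then show ?thesis using True by (simp add: h_def)
    next
      case False
      then have "real i / n \<le> x" "x \<le> (real i + 1) / n - \<eta>" using x by (auto simp: P_def)
      then have "real i \<le> real n * x" "real n * x \<le> real i + 1 - \<eta> * real n" using rn
        by (auto simp: divide_simps mult.commute)
      moreover have "\<eta> * real n > 0" using eta rn by simp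
      ultimately have "real i \<le> real n * x" "real n * x < real i + 1" by linarith+
      then have "\<lfloor>real n * x\<rfloor> = int i" by (simp add: floor_eq_iff)
      then show ?thesis using False i by (simp add: h_def)
    qed
    then show "continuous_on (P i) (h n gs)"
      using continuous_on_cong[of "P i" "P i" "h n gs" "\<lambda>_. gs ! i"] continuous_on_const by blast
  qed (auto simp: clP)
  moreover have "measure lebesgue ({0..1} - A) \<le> \<epsilon>"
  proof -
    define B where "B = (\<Union>i\<in>{..<n}. {(real i + 1) / n - \<eta> .. (real i + 1) / n})"
    have sub: "{0..1} - A \<subseteq> B"
    proof
      fix x assume x: "x \<in> {0..1} - A"
      then have x01: "0 \<le> x" "x \<le> 1" by auto
      define j where "j = nat \<lfloor>real n * x\<rfloor>"
      have f0: "\<lfloor>real n * x\<rfloor> \<ge> 0" using x01 rn by simp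
      have jle: "real j \<le> real n * x" "real n * x < real j + 1" using f0 unfolding j_def by linarith+
      show "x \<in> B"
      proof (cases "j \<ge> n - 1")
        case True
        then have "real (n-1) \<le> real n * x" using jle by linarith
        then have "x \<in> P (n-1)" using x01 rn by (auto simp: P_def divide_simps mult.commute)
        then have "x \<in> A" using n unfolding A_def by auto
        then show ?thesis using x by blast
      next
        case False
        then have jn: "j < n" "j \<noteq> n - 1" by auto
        have "x \<notin> P j" using x jn unfolding A_def by auto
        moreover have "real j / n \<le> x" using jle rn by (auto simp: divide_simps mult.commute)
        ultimately have "x > (real j + 1) / n - \<eta>" using jn by (auto simp: P_def)
        moreover have "x \<le> (real j + 1) / n" using jle rn by (auto simp: divide_simps mult.commute)
        ultimately show ?thesis using jn unfolding B_def by (intro UN_I[of j]) auto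
      qed
    qed
    have Bl: "B \<in> lmeasurable" unfolding B_def by (intro lmeasurable_compact compact_UN) auto
    have "measure lebesgue ({0..1} - A) \<le> measure lebesgue B"
      by (rule measure_mono_fmeasurable[OF sub _ Bl])
         (use \<open>closed A\<close> in \<open>metis borel_closed sets_completionI_sets sets_lborel sets.Diff atLeastAtMost_borel\<close>)
    also have "\<dots> \<le> (\<Sum>i\<in>{..<n}. measure lebesgue {(real i + 1) / n - \<eta> .. (real i + 1) / n})"
      unfolding B_def by (rule measure_UNION_le) auto
    also have "\<dots> = (\<Sum>i\<in>{..<n}. \<eta>)" using eta by simp
    also have "\<dots> = \<epsilon>" using rn by (simp add: \<eta>_def)
    finally show ?thesis .
  qed
  ultimately show "\<exists>A. closed A \<and> A \<subseteq> {0..1} \<and> measure lebesgue ({0..1} - A) \<le> \<epsilon> \<and> continuous_on A (h n gs)"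
    by blast
qed
lemma idx_bounds:
  assumes "x \<in> {0..1::real}" "n \<ge> 1"
  shows "min (nat \<lfloor>real n * x\<rfloor>) (n-1) < n"
    "real (min (nat \<lfloor>real n * x\<rfloor>) (n-1)) / n \<le> x"
    "x \<le> (real (min (nat \<lfloor>real n * x\<rfloor>) (n-1)) + 1) / n"
proof -
  have n: "real n > 0" using assms by simp
  have x: "0 \<le> x" "x \<le> 1" using assms by auto
  have f0: "\<lfloor>real n * x\<rfloor> \<ge> 0" using x n by simp
  have fle: "real_of_int \<lfloor>real n * x\<rfloor> \<le> real n * x" by simp
  have flt: "real n * x < real_of_int \<lfloor>real n * x\<rfloor> + 1" by linarith
  have nx: "real n * x \<le> real n" using x n by (simp add: mult_left_le)
  show "min (nat \<lfloor>real n * x\<rfloor>) (n-1) < n" using assms by simp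
  show "real (min (nat \<lfloor>real n * x\<rfloor>) (n-1)) / n \<le> x"
  proof -
    have "real (min (nat \<lfloor>real n * x\<rfloor>) (n-1)) \<le> real n * x"
      using fle f0 by (smt (verit) nat_le_real_less of_nat_le_iff of_nat_min min_def of_int_of_nat_eq nat_0_le)
    then show ?thesis using n by (simp add: divide_simps mult.commute)
  qed
  show "x \<le> (real (min (nat \<lfloor>real n * x\<rfloor>) (n-1)) + 1) / n"
  proof (cases "nat \<lfloor>real n * x\<rfloor> \<le> n - 1")
    case True
    then have "min (nat \<lfloor>real n * x\<rfloor>) (n-1) = nat \<lfloor>real n * x\<rfloor>" by simp
    moreover have "real (nat \<lfloor>real n * x\<rfloor>) = real_of_int \<lfloor>real n * x\<rfloor>" using f0 by simp
    ultimately have "real n * x \<le> real (min (nat \<lfloor>real n * x\<rfloor>) (n-1)) + 1" using flt by simp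
    then show ?thesis using n by (simp add: divide_simps mult.commute)
  next
    case False
    then have "min (nat \<lfloor>real n * x\<rfloor>) (n-1) = n - 1" by simp
    moreover have "real (n - 1) + 1 = real n" using assms by simp
    ultimately show ?thesis using n x by simp
  qed
qed
theorem corollary4p2:
  shows "(L0 :: (real \<Rightarrow> 'a::topological_group_add) set) =
    L0_closure (\<Union>n\<in>{1..}. {h n gs | gs. length gs = n})"
proof (rule antisym)
  show "L0_closure (\<Union>n\<in>{1..}. {h n gs | gs. length gs = n}) \<subseteq> (L0 :: (real \<Rightarrow> 'a) set)"
    by (auto simp: L0_closure_def)
  show "(L0 :: (real \<Rightarrow> 'a) set) \<subseteq> L0_closure (\<Union>n\<in>{1..}. {h n gs | gs. length gs = n})"
  proof
    fix f :: "real \<Rightarrow> 'a" assume fL: "f \<in> L0"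
    then have sm: "strongly_measurable f" by (simp add: L0_def)
    show "f \<in> L0_closure (\<Union>n\<in>{1..}. {h n gs | gs. length gs = n})" unfolding L0_closure_def
    proof (intro CollectI conjI allI impI fL)
      fix U :: "'a set" and \<epsilon> :: real assume Ue: "open U \<and> 0 \<in> U \<and> \<epsilon> > 0"
      then have U: "open U" "0 \<in> U" and e: "\<epsilon> > 0" by auto
      obtain A where A: "closed A" "A \<subseteq> {0..1}" "measure lebesgue ({0..1} - A) \<le> \<epsilon> / 2" "continuous_on A f"
        using sm e unfolding strongly_measurable_def by (meson half_gt_zero)
      have "compact A" using A(1,2) compact_eq_bounded_closed bounded_subset[OF bounded_closed_interval] by blast
      then obtain d where d: "d > 0" "\<And>x y. x \<in> A \<Longrightarrow> y \<in> A \<Longrightarrow> dist x y < d \<Longrightarrow> - f x + f y \<in> U"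
        using unif[OF _ A(4) U] by blast
      obtain k where k: "inverse (real (Suc k)) < d" using reals_Archimedean d by blast
      define n where "n = Suc k"
      have n1: "n \<ge> 1" by (simp add: n_def)
      have nd: "1 / real n < d" using k by (simp add: n_def inverse_eq_divide)
      define idx where "idx x = min (nat \<lfloor>real n * x\<rfloor>) (n-1)" for x :: real
      define c where "c i = (if \<exists>a\<in>A. idx a = i then f (SOME a. a \<in> A \<and> idx a = i) else 0)" for i
      define gs where "gs = map c [0..<n]"
      have lgs: "length gs = n" by (simp add: gs_def)
      have gS: "h n gs \<in> (\<Union>n\<in>{1..}. {h n gs | gs. length gs = n})" using n1 lgs by auto
      have gL: "h n gs \<in> L0" using step_sm[OF n1] by (simp add: L0_def)
      have good: "- f x + h n gs x \<in> U" if x: "x \<in> A" for x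
      proof -
        have x01: "x \<in> {0..1}" using x A(2) by blast
        define i where "i = idx x"
        have i: "i < n" using idx_bounds(1)[OF x01 n1] by (simp add: i_def idx_def)
        have ex: "\<exists>a. a \<in> A \<and> idx a = i" using x i_def by blast
        define a where "a = (SOME a. a \<in> A \<and> idx a = i)"
        have a: "a \<in> A" "idx a = i" using someI_ex[OF ex] by (auto simp: a_def)
        have a01: "a \<in> {0..1}" using a A(2) by blast
        have "h n gs x = gs ! i" by (simp add: h_def i_def idx_def)
        also have "\<dots> = c i" using i by (simp add: gs_def)
        also have "\<dots> = f a" unfolding c_def a_def using x i_def by auto
        finally have hx: "h n gs x = f a" .
        have b1: "real i / n \<le> x" "x \<le> (real i + 1) / n"
          using idx_bounds(2,3)[OF x01 n1] by (simp_all add: i_def idx_def)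
        have b2: "real i / n \<le> a" "a \<le> (real i + 1) / n"
          using idx_bounds(2,3)[OF a01 n1] a(2) by (simp_all add: idx_def)
        have "(real i + 1) / n - real i / n = 1 / n" by (simp add: diff_divide_distrib[symmetric])
        then have "dist x a \<le> 1 / n" using b1 b2 by (simp add: dist_real_def abs_le_iff)
        then have "dist x a < d" using nd by linarith
        then show ?thesis using d(2)[OF x a(1)] hx by simp
      qed
      define bad where "bad = {x \<in> {0..1}. - f x + h n gs x \<notin> U}"
      have "bad = {x \<in> {0..1}. - f x + gs ! min (nat \<lfloor>real n * x\<rfloor>) (n-1) \<in> - U}"
        by (simp add: bad_def h_def)
      then have bm: "bad \<in> sets lebesgue" using meas_set[OF sm, of "- U" gs n] U(1) by (simp add: closed_Compl)
      have bsub: "bad \<subseteq> {0..1} - A" using good bad_def by blast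
      have "{0..1} - A \<in> lmeasurable"
        using lm01 A(1) closed_leb by (metis Diff_subset sets.Diff atLeastAtMost_borel sets_completionI_sets sets_lborel)
      then have "measure lebesgue bad \<le> measure lebesgue ({0..1} - A)"
        using measure_mono_fmeasurable[OF bsub bm] by blast
      then have "measure lebesgue bad < \<epsilon>" using A(3) e by linarith
      then have "h n gs \<in> L0_nbhd f U \<epsilon>"
        unfolding L0_nbhd_def using gL bm bad_def by blast
      then show "L0_nbhd f U \<epsilon> \<inter> (\<Union>n\<in>{1..}. {h n gs | gs. length gs = n}) \<noteq> {}"
        using gS by blast
    qed
  qed
qed

end
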